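(* For all $\alpha\in\dot\Delta$ and all $\beta'\in\dot\Delta'$, the product $r_\alpha r_{\beta'}$ has infinite order.
   Context: Let $\tau=(1+\sqrt5)/2$, $\tau'=(1-\sqrt5)/2$. Let $\Delta\subset\mathbb{R}^4$ be the set of 120 vectors consisting of: the 8 vectors obtained from $(\pm1,0,0,0)$ by permuting coordinates; the 16 vectors $\frac12(\pm1,\pm1,\pm1,\pm1)$; and the 96 vectors obtained from $\frac12(0,\pm1,\pm\tau',\pm\tau)$ (all sign choices) by even permutations of the coordinates. Let $\Delta'$ be the image of $\Delta$ under the Galois conjugation $\tau\leftrightarrow\tau'$ applied to each coordinate. Put $K=\Delta\cap\Delta'$, $\dot\Delta=\Delta\setminus K$, $\dot\Delta'=\Delta'\setminus K$. For a unit vector $a$, $r_a(x)=x-2(x\cdot a)a$ is the orthogonal reflection in $a$. *)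

theory Defs
  imports "HOL-Analysis.Analysis" "HOL-Combinatorics.Permutations"
begin

definition tau :: real where "tau = (1 + sqrt 5) / 2"
definition tau' :: real where "tau' = (1 - sqrt 5) / 2"

definition Delta :: "(real^4) set" where
  "Delta =
     {v. \<exists>i::4. \<exists>s\<in>{-1, 1::real}. v = (\<chi> j. if j = i then s else 0)}
   \<union> {v. \<exists>s::4 \<Rightarrow> real. (\<forall>j. s j \<in> {-1, 1}) \<and> v = (\<chi> j. s j / 2)}
   \<union> {v. \<exists>s::4 \<Rightarrow> real. \<exists>p::4 \<Rightarrow> 4. (\<forall>j. s j \<in> {-1, 1}) \<and> p permutes UNIV \<and> evenperm p \<and>
          v = (\<chi> j. s j * ((vector [0, 1, tau', tau] :: real^4) $ p j) / 2)}"

definition galois :: "real \<Rightarrow> real" where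
  "galois x = (THE y. \<exists>a\<in>\<rat>. \<exists>b\<in>\<rat>. x = a + b * sqrt 5 \<and> y = a - b * sqrt 5)"

definition Delta' :: "(real^4) set" where
  "Delta' = (\<lambda>v. \<chi> i. galois (v $ i)) ` Delta"

definition K :: "(real^4) set" where "K = Delta \<inter> Delta'"
definition Delta_dot :: "(real^4) set" where "Delta_dot = Delta - K"
definition Delta'_dot :: "(real^4) set" where "Delta'_dot = Delta' - K"

definition reflect :: "real^4 \<Rightarrow> real^4 \<Rightarrow> real^4" where
  "reflect a x = x - (2 * (x \<bullet> a)) *\<^sub>R a"

end

theory Submission
  imports Defs
begin

lemma sqrt5_irr: "sqrt 5 \<notin> \<rat>"
proof
  assume "sqrt 5 \<in> \<rat>"
  then obtain m n :: nat where n: "n \<noteq> 0" and e: "\<bar>sqrt 5\<bar> = real m / real n" and c: "coprime m n"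
    by (rule Rats_abs_nat_div_natE)
  have "sqrt 5 * real n = real m" using e n by simp
  then have "(sqrt 5 * real n)^2 = (real m)^2" by simp
  then have "5 * (real n)^2 = (real m)^2" by (simp add: power_mult_distrib)
  then have eq: "5 * n^2 = m^2" by (simp flip: of_nat_power)
  have p: "prime (5::nat)" by simp
  have "5 dvd m^2" using eq by (metis dvd_triv_left)
  then have "5 dvd m" using p prime_dvd_power by blast
  then obtain k where "m = 5 * k" by blast
  then have "n^2 = 5 * k^2" using eq by simp
  then have "5 dvd n^2" by simp
  then have "5 dvd n" using p prime_dvd_power by blast
  with \<open>5 dvd m\<close> c show False
    using coprime_common_divisor_nat by fastforce
qed


definition Zt :: "real \<Rightarrow> bool" where "Zt x \<longleftrightarrow> (\<exists>(a::int) (b::int). x = a + b * tau)"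
definition D2 :: "real \<Rightarrow> bool" where "D2 x \<longleftrightarrow> (\<exists>(a::int) (b::int). x = 2 * (a + b * tau))"
definition Oddt :: "real \<Rightarrow> bool" where "Oddt x \<longleftrightarrow> Zt x \<and> \<not> D2 x"

lemma tau_sq: "tau^2 = tau + 1"
  unfolding tau_def by (simp add: power2_eq_square field_simps)

lemma tau'_eq: "tau' = 1 - tau"
  unfolding tau_def tau'_def by (simp add: field_simps)

lemma tau_irr: "tau \<notin> \<rat>"
proof
  assume "tau \<in> \<rat>"
  then have "2 * tau - 1 \<in> \<rat>" by simp
  moreover have "2 * tau - 1 = sqrt 5" unfolding tau_def by (simp add: field_simps)
  ultimately show False using sqrt5_irr by simp
qed

lemma Zt_unique:
  fixes a b c d :: int
  assumes "a + b * tau = c + d * tau"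
  shows "a = c \<and> b = d"
proof (cases "b = d")
  case True then show ?thesis using assms by simp
next
  case False
  then have "real_of_int d - real_of_int b \<noteq> 0" by simp
  moreover have "(real_of_int d - b) * tau = a - c" using assms by (simp add: algebra_simps)
  ultimately have "tau = (a - c) / (real_of_int d - b)" by (simp add: field_simps)
  then have "tau \<in> \<rat>" by (metis Rats_divide Rats_diff Rats_of_int)
  then show ?thesis using tau_irr by simp
qed

lemma mul_rep: "(of_int a + of_int b * tau) * (of_int c + of_int d * tau) =
   of_int (a*c + b*d) + of_int (a*d + b*c + b*d) * tau"
proof -
  have t: "tau * tau = tau + 1" using tau_sq by (simp add: power2_eq_square)
  have "(of_int a + of_int b * tau) * (of_int c + of_int d * tau) =
     of_int a * of_int c + (of_int a * of_int d + of_int b * of_int c) * tau + of_int b * of_int d * (tau * tau)"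
    by (simp add: algebra_simps)
  also have "\<dots> = of_int (a*c + b*d) + of_int (a*d + b*c + b*d) * tau"
    unfolding t by (simp add: algebra_simps)
  finally show ?thesis .
qed

lemma Zt_int: "Zt (of_int a)" unfolding Zt_def by (rule exI[of _ a], rule exI[of _ 0], simp)
lemma Zt_tau: "Zt tau" unfolding Zt_def by (rule exI[of _ 0], rule exI[of _ 1], simp)
lemma Zt_add: "Zt x \<Longrightarrow> Zt y \<Longrightarrow> Zt (x + y)"
proof -
  assume "Zt x" "Zt y"
  then obtain a b c d :: int where x: "x = a + b * tau" and y: "y = c + d * tau" unfolding Zt_def by blast
  have "x + y = of_int (a + c) + of_int (b + d) * tau" unfolding x y by (simp add: algebra_simps)
  then show "Zt (x + y)" unfolding Zt_def by blast
qed
lemma Zt_minus: "Zt x \<Longrightarrow> Zt (- x)"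
proof -
  assume "Zt x"
  then obtain a b :: int where x: "x = a + b * tau" unfolding Zt_def by blast
  have "- x = of_int (- a) + of_int (- b) * tau" unfolding x by (simp add: algebra_simps)
  then show "Zt (- x)" unfolding Zt_def by blast
qed
lemma Zt_diff: "Zt x \<Longrightarrow> Zt y \<Longrightarrow> Zt (x - y)"
  using Zt_add[of x "- y"] Zt_minus[of y] by simp
lemma Zt_mult: "Zt x \<Longrightarrow> Zt y \<Longrightarrow> Zt (x * y)"
proof -
  assume "Zt x" "Zt y"
  then obtain a b c d :: int where x: "x = a + b * tau" and y: "y = c + d * tau" unfolding Zt_def by blast
  have "x * y = of_int (a*c + b*d) + of_int (a*d + b*c + b*d) * tau"
    unfolding x y by (rule mul_rep)
  then show "Zt (x * y)" unfolding Zt_def by blast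
qed
lemma Zt_numeral: "Zt (numeral n)" using Zt_int[of "numeral n"] by simp
lemma Zt_one: "Zt 1" using Zt_int[of 1] by simp
lemma Zt_zero: "Zt 0" using Zt_int[of 0] by simp
lemma Zt_pow: "Zt x \<Longrightarrow> Zt (x ^ n)" by (induction n) (auto simp: Zt_one Zt_mult)

lemma D2_Zt: "D2 x \<Longrightarrow> Zt x"
  unfolding D2_def Zt_def by (metis distrib_left mult.assoc of_int_mult of_int_numeral)
lemma D2_two: "Zt x \<Longrightarrow> D2 (2 * x)"
  unfolding D2_def Zt_def by blast
lemma D2_mult: "D2 x \<Longrightarrow> Zt y \<Longrightarrow> D2 (x * y)"
proof -
  assume "D2 x" "Zt y"
  then obtain a b :: int where x: "x = 2 * (a + b * tau)" unfolding D2_def by blast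
  have "Zt (a + b * tau)" unfolding Zt_def by blast
  then have "Zt ((a + b * tau) * y)" using \<open>Zt y\<close> Zt_mult by blast
  then show ?thesis using D2_two x by (metis mult.assoc)
qed
lemma D2_add: "D2 x \<Longrightarrow> D2 y \<Longrightarrow> D2 (x + y)"
proof -
  assume "D2 x" "D2 y"
  then obtain a b c d :: int where x: "x = 2 * (a + b * tau)" and y: "y = 2 * (c + d * tau)" unfolding D2_def by blast
  have "Zt ((a + b * tau) + (c + d * tau))" by (rule Zt_add) (auto simp: Zt_def)
  then show ?thesis using D2_two x y by (metis distrib_left)
qed
lemma D2_minus: "D2 x \<Longrightarrow> D2 (- x)"
  using D2_mult[of x "-1"] Zt_int[of "-1"] by simp

lemma not_D2_rep:
  assumes "Zt x" "\<not> D2 x"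
  obtains a b :: int where "x = a + b * tau" "odd a \<or> odd b"
proof -
  obtain a b :: int where x: "x = a + b * tau" using assms(1) unfolding Zt_def by blast
  have "odd a \<or> odd b"
  proof (rule ccontr)
    assume "\<not> (odd a \<or> odd b)"
    then obtain a' b' where "a = 2 * a'" "b = 2 * b'" by blast
    then have "x = 2 * (a' + b' * tau)" using x by (simp add: algebra_simps)
    then show False using assms(2) unfolding D2_def by blast
  qed
  then show ?thesis using that x by blast
qed

lemma Oddt_intro:
  fixes a b :: int
  assumes "odd a \<or> odd b"
  shows "Oddt (a + b * tau)"
  unfolding Oddt_def
proof
  show "Zt (a + b * tau)" unfolding Zt_def by blast
  show "\<not> D2 (a + b * tau)"
  proof
    assume "D2 (a + b * tau)"
    then obtain c d :: int where "a + b * tau = 2 * (c + d * tau)" unfolding D2_def by blast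
    then have "a + b * tau = of_int (2*c) + of_int (2*d) * tau" by (simp add: algebra_simps)
    then have "a = 2*c \<and> b = 2*d" using Zt_unique by blast
    then show False using assms by auto
  qed
qed

lemma Oddt_mult:
  assumes "Oddt x" "Oddt y"
  shows "Oddt (x * y)"
proof -
  obtain a b :: int where x: "x = a + b * tau" and ab: "odd a \<or> odd b"
    using assms(1) not_D2_rep unfolding Oddt_def by blast
  obtain c d :: int where y: "y = c + d * tau" and cd: "odd c \<or> odd d"
    using assms(2) not_D2_rep unfolding Oddt_def by blast
  have e: "x * y = of_int (a*c + b*d) + of_int (a*d + b*c + b*d) * tau"
    unfolding x y by (rule mul_rep)
  have "odd (a*c + b*d) \<or> odd (a*d + b*c + b*d)"
    using ab cd by (cases "even a"; cases "even b"; cases "even c"; cases "even d"; simp)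
  then show ?thesis unfolding e by (rule Oddt_intro)
qed

lemma Oddt_add_D2: "Oddt x \<Longrightarrow> D2 y \<Longrightarrow> Oddt (x + y)"
proof -
  assume a: "Oddt x" "D2 y"
  have "Zt (x + y)" using a D2_Zt Zt_add unfolding Oddt_def by blast
  moreover have "\<not> D2 (x + y)"
  proof
    assume "D2 (x + y)"
    then have "D2 ((x + y) + (- y))" using a D2_add D2_minus by blast
    then show False using a unfolding Oddt_def by simp
  qed
  ultimately show ?thesis unfolding Oddt_def by blast
qed

lemma Oddt_nz: "Oddt x \<Longrightarrow> x \<noteq> 0"
proof
  assume "Oddt x" "x = 0"
  moreover have "D2 0" unfolding D2_def by (rule exI[of _ 0], rule exI[of _ 0], simp)
  ultimately show False unfolding Oddt_def by simp
qed

lemma Oddt_minus: "Oddt x \<Longrightarrow> Oddt (- x)"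
proof -
  assume a: "Oddt x"
  have "\<not> D2 (- x)" using a D2_minus[of "- x"] unfolding Oddt_def by auto
  then show ?thesis using a Zt_minus unfolding Oddt_def by blast
qed

lemma Oddt_pow:
  assumes x: "Oddt x" shows "Oddt (x ^ n)"
proof (induction n)
  case 0
  have "Oddt (of_int 1 + of_int 0 * tau)" by (rule Oddt_intro) simp
  then show ?case by simp
next
  case (Suc n)
  have e: "x ^ Suc n = x * x ^ n" by simp
  show ?case unfolding e using x Suc.IH by (rule Oddt_mult)
qed



fun pq :: "real \<Rightarrow> nat \<Rightarrow> real \<times> real" where
  "pq c 0 = (0, 1)"
| "pq c (Suc n) = ((4*c^2-1) * fst (pq c n) + 2*c * snd (pq c n), -2*c*fst (pq c n) - snd (pq c n))"

lemma reflect_lin: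
  fixes a x :: "real^4"
  shows "reflect a (p *\<^sub>R a + q *\<^sub>R b) = (p - 2 * (p * (a \<bullet> a) + q * (b \<bullet> a))) *\<^sub>R a + q *\<^sub>R b"
  unfolding reflect_def by (simp add: inner_add_left algebra_simps)

lemma T_step:
  fixes \<alpha> \<beta> :: "real^4"
  assumes aa: "\<alpha> \<bullet> \<alpha> = 1" and bb: "\<beta> \<bullet> \<beta> = 1"
  shows "(reflect \<alpha> \<circ> reflect \<beta>) (p *\<^sub>R \<alpha> + q *\<^sub>R \<beta>) =
     ((4*(\<alpha>\<bullet>\<beta>)^2-1) * p + 2*(\<alpha>\<bullet>\<beta>) * q) *\<^sub>R \<alpha> + (-2*(\<alpha>\<bullet>\<beta>)*p - q) *\<^sub>R \<beta>"
proof -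
  let ?c = "\<alpha> \<bullet> \<beta>"
  have "reflect \<beta> (p *\<^sub>R \<alpha> + q *\<^sub>R \<beta>) = reflect \<beta> (q *\<^sub>R \<beta> + p *\<^sub>R \<alpha>)" by (simp add: add.commute)
  also have "\<dots> = (q - 2 * (q * (\<beta> \<bullet> \<beta>) + p * (\<alpha> \<bullet> \<beta>))) *\<^sub>R \<beta> + p *\<^sub>R \<alpha>" by (rule reflect_lin)
  also have "\<dots> = p *\<^sub>R \<alpha> + (- q - 2 * p * ?c) *\<^sub>R \<beta>" using bb by (simp add: algebra_simps)
  finally have 1: "reflect \<beta> (p *\<^sub>R \<alpha> + q *\<^sub>R \<beta>) = p *\<^sub>R \<alpha> + (- q - 2 * p * ?c) *\<^sub>R \<beta>" .
  have "reflect \<alpha> (p *\<^sub>R \<alpha> + (- q - 2 * p * ?c) *\<^sub>R \<beta>) =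
      (p - 2 * (p * (\<alpha> \<bullet> \<alpha>) + (- q - 2 * p * ?c) * (\<beta> \<bullet> \<alpha>))) *\<^sub>R \<alpha> + (- q - 2 * p * ?c) *\<^sub>R \<beta>"
    by (rule reflect_lin)
  also have "\<dots> = ((4*?c^2-1) * p + 2*?c * q) *\<^sub>R \<alpha> + (-2*?c*p - q) *\<^sub>R \<beta>"
    using aa by (simp add: inner_commute algebra_simps power2_eq_square)
  finally show ?thesis using 1 by simp
qed

lemma T_iter:
  fixes \<alpha> \<beta> :: "real^4"
  assumes aa: "\<alpha> \<bullet> \<alpha> = 1" and bb: "\<beta> \<bullet> \<beta> = 1"
  shows "((reflect \<alpha> \<circ> reflect \<beta>) ^^ n) \<beta> = fst (pq (\<alpha>\<bullet>\<beta>) n) *\<^sub>R \<alpha> + snd (pq (\<alpha>\<bullet>\<beta>) n) *\<^sub>R \<beta>"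
proof (induction n)
  case 0 then show ?case by simp
next
  case (Suc n)
  have "((reflect \<alpha> \<circ> reflect \<beta>) ^^ Suc n) \<beta> = (reflect \<alpha> \<circ> reflect \<beta>) (((reflect \<alpha> \<circ> reflect \<beta>) ^^ n) \<beta>)"
    by simp
  also have "\<dots> = (reflect \<alpha> \<circ> reflect \<beta>) (fst (pq (\<alpha>\<bullet>\<beta>) n) *\<^sub>R \<alpha> + snd (pq (\<alpha>\<bullet>\<beta>) n) *\<^sub>R \<beta>)"
    by (simp only: Suc.IH)
  also have "\<dots> = fst (pq (\<alpha>\<bullet>\<beta>) (Suc n)) *\<^sub>R \<alpha> + snd (pq (\<alpha>\<bullet>\<beta>) (Suc n)) *\<^sub>R \<beta>"
    unfolding T_step[OF aa bb] by simp
  finally show ?case .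
qed

lemma pq_inv:
  assumes od: "Oddt (4*c)"
  shows "Oddt (2*4^n * fst (pq c (Suc n))) \<and> Zt (4^n * snd (pq c (Suc n)))"
proof (induction n)
  case 0
  have "Zt (-1)" using Zt_int[of "-1"] by simp
  then show ?case using od by (simp add: algebra_simps)
next
  case (Suc n)
  define P where "P = 2*4^n * fst (pq c (Suc n))"
  define Q where "Q = 4^n * snd (pq c (Suc n))"
  define z where "z = 4 * c"
  have P: "Oddt P" and Q: "Zt Q" using Suc unfolding P_def Q_def by auto
  have zO: "Oddt z" using od z_def by simp
  have zZ: "Zt z" using zO Oddt_def by blast
  have PZ: "Zt P" using P Oddt_def by blast
  have e1: "2*4^(Suc n) * fst (pq c (Suc (Suc n))) = z^2 * P + 2 * (-2 * P + 2 * z * Q)"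
    unfolding P_def Q_def z_def by (simp add: algebra_simps power2_eq_square power_mult_distrib power_mult)
  have e2: "4^(Suc n) * snd (pq c (Suc (Suc n))) = - z * P - 4 * Q"
    unfolding P_def Q_def z_def by (simp add: algebra_simps power2_eq_square power_mult_distrib power_mult)
  have "Oddt (z^2 * P)" using Oddt_mult Oddt_pow zO P by blast
  moreover have "Zt (-2 * P + 2 * z * Q)"
    by (intro Zt_add Zt_mult Zt_minus Zt_numeral zZ PZ Q)
  then have "D2 (2 * (-2 * P + 2 * z * Q))" by (rule D2_two)
  ultimately have "Oddt (z^2 * P + 2 * (-2 * P + 2 * z * Q))" by (rule Oddt_add_D2)
  moreover have "Zt (- z * P - 4 * Q)"
    by (intro Zt_diff Zt_mult Zt_minus Zt_numeral zZ PZ Q)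
  ultimately show ?case unfolding e1 e2 by simp
qed

lemma core:
  fixes \<alpha> \<beta> :: "real^4"
  assumes aa: "\<alpha> \<bullet> \<alpha> = 1" and bb: "\<beta> \<bullet> \<beta> = 1" and od: "Oddt (4 * (\<alpha> \<bullet> \<beta>))"
  shows "\<forall>n::nat. n > 0 \<longrightarrow> (reflect \<alpha> \<circ> reflect \<beta>) ^^ n \<noteq> id"
proof (intro allI impI notI)
  fix n :: nat
  assume n: "n > 0" and T: "(reflect \<alpha> \<circ> reflect \<beta>) ^^ n = id"
  obtain m where m: "n = Suc m" using n gr0_implies_Suc by blast
  define c where "c = \<alpha> \<bullet> \<beta>"
  define p where "p = fst (pq c n)"
  define q where "q = snd (pq c n)"
  have "\<beta> = p *\<^sub>R \<alpha> + q *\<^sub>R \<beta>"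
    using T_iter[OF aa bb, of n] T unfolding p_def q_def c_def by simp
  then have e1: "\<alpha> \<bullet> \<beta> = \<alpha> \<bullet> (p *\<^sub>R \<alpha> + q *\<^sub>R \<beta>)" and e2: "\<beta> \<bullet> \<beta> = \<beta> \<bullet> (p *\<^sub>R \<alpha> + q *\<^sub>R \<beta>)"
    by simp_all
  have h1: "c = p + q * c" using e1 aa unfolding c_def by (simp add: inner_add_right)
  have h2: "1 = p * c + q" using e2 bb unfolding c_def by (simp add: inner_add_right inner_commute)
  have h3: "p * (1 - c^2) = 0"
  proof -
    have "p = c * (1 - q)" using h1 by (simp add: algebra_simps)
    moreover have "1 - q = p * c" using h2 by simp
    ultimately have "p = p * c^2" by (simp add: power2_eq_square algebra_simps)
    then show ?thesis by (simp add: algebra_simps)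
  qed
  have "c^2 \<noteq> 1"
  proof
    assume "c^2 = 1"
    then have "c = 1 \<or> c = -1" by (simp add: power2_eq_1_iff)
    then have "4 * c = 2 * (of_int (2 * (if c = 1 then 1 else -1)) + of_int 0 * tau)" by auto
    then have "D2 (4 * c)" unfolding D2_def by blast
    then show False using od unfolding c_def Oddt_def by simp
  qed
  then have "p = 0" using h3 by simp
  moreover have "Oddt (2*4^m * p)" using pq_inv[of c m] od unfolding p_def c_def m by simp
  ultimately show False using Oddt_nz by fastforce
qed



definition Bv :: "4 \<Rightarrow> real" where "Bv k = (vector [0, 1, tau', tau] :: real^4) $ k"
definition Gv :: "4 \<Rightarrow> real" where "Gv k = (vector [0, 1, tau, tau'] :: real^4) $ k"

lemma Bv_simps: "Bv 1 = 0" "Bv 2 = 1" "Bv 3 = tau'" "Bv 4 = tau"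
  unfolding Bv_def by (simp_all add: vector_def)
lemma Gv_simps: "Gv 1 = 0" "Gv 2 = 1" "Gv 3 = tau" "Gv 4 = tau'"
  unfolding Gv_def by (simp_all add: vector_def)

definition eB :: "4 \<Rightarrow> int \<times> int" where
  "eB k = (if k = 1 then (0,0) else if k = 2 then (1,0) else if k = 3 then (1,-1) else (0,1))"
definition eG :: "4 \<Rightarrow> int \<times> int" where
  "eG k = (if k = 1 then (0,0) else if k = 2 then (1,0) else if k = 3 then (0,1) else (1,-1))"

definition pm :: "int \<times> int \<Rightarrow> int \<times> int \<Rightarrow> int \<times> int" where
  "pm x y = (fst x * fst y + snd x * snd y, fst x * snd y + snd x * fst y + snd x * snd y)"

lemma Bv_enc: "Bv k = of_int (fst (eB k)) + of_int (snd (eB k)) * tau"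
  using exhaust_4[of k] by (auto simp: Bv_simps eB_def tau'_eq)
lemma Gv_enc: "Gv k = of_int (fst (eG k)) + of_int (snd (eG k)) * tau"
  using exhaust_4[of k] by (auto simp: Gv_simps eG_def tau'_eq)

lemma BG_enc: "Bv k * Gv l = of_int (fst (pm (eB k) (eG l))) + of_int (snd (pm (eB k) (eG l))) * tau"
  unfolding Bv_enc Gv_enc mul_rep pm_def by simp

lemma sum_enc: "(\<Sum>k\<in>UNIV. Bv k * Gv (s k)) =
   of_int (\<Sum>k\<in>UNIV. fst (pm (eB k) (eG (s k)))) + of_int (\<Sum>k\<in>UNIV. snd (pm (eB k) (eG (s k)))) * tau"
  unfolding BG_enc by (simp add: sum.distrib sum_distrib_right)

lemma inj_neq: "inj f \<Longrightarrow> f x = v \<Longrightarrow> x \<noteq> y \<Longrightarrow> f y \<noteq> v"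
  by (metis injD)

lemma perm4_decomp:
  fixes s :: "4 \<Rightarrow> 4"
  assumes sp: "s permutes UNIV"
  shows "\<exists>a b c. b \<noteq> 1 \<and> c \<noteq> 1 \<and> c \<noteq> 2 \<and>
     s = Transposition.transpose 1 a \<circ> Transposition.transpose 2 b \<circ> Transposition.transpose 3 c"
proof -
  have inj: "inj s" using permutes_inj[OF sp] .
  define a where "a = s 1"
  define s1 where "s1 = Transposition.transpose 1 a \<circ> s"
  have i1: "inj s1" unfolding s1_def using inj by (simp add: inj_compose inj_transpose)
  have s11: "s1 1 = 1" unfolding s1_def a_def by simp
  define b where "b = s1 2"
  have b1: "b \<noteq> 1" unfolding b_def using inj_neq[OF i1 s11, of 2] by simp
  define s2 where "s2 = Transposition.transpose 2 b \<circ> s1"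
  have i2: "inj s2" unfolding s2_def using i1 by (simp add: inj_compose inj_transpose)
  have s21: "s2 1 = 1" unfolding s2_def using s11 b1 by simp
  have s22: "s2 2 = 2" unfolding s2_def b_def by simp
  define c where "c = s2 3"
  have c1: "c \<noteq> 1" unfolding c_def using inj_neq[OF i2 s21, of 3] by simp
  have c2: "c \<noteq> 2" unfolding c_def using inj_neq[OF i2 s22, of 3] by simp
  define s3 where "s3 = Transposition.transpose 3 c \<circ> s2"
  have i3: "inj s3" unfolding s3_def using i2 by (simp add: inj_compose inj_transpose)
  have s31: "s3 1 = 1" unfolding s3_def using s21 c1 by simp
  have s32: "s3 2 = 2" unfolding s3_def using s22 c2 by simp
  have s33: "s3 3 = 3" unfolding s3_def c_def by simp
  have s34: "s3 4 = 4"
  proof -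
    have "s3 4 \<noteq> 1" using inj_neq[OF i3 s31, of 4] by simp
    moreover have "s3 4 \<noteq> 2" using inj_neq[OF i3 s32, of 4] by simp
    moreover have "s3 4 \<noteq> 3" using inj_neq[OF i3 s33, of 4] by simp
    ultimately show ?thesis using exhaust_4[of "s3 4"] by blast
  qed
  have "s3 = id"
  proof
    fix x :: 4 show "s3 x = id x" using exhaust_4[of x] s31 s32 s33 s34 by auto
  qed
  have "s = Transposition.transpose 1 a \<circ> Transposition.transpose 2 b \<circ> Transposition.transpose 3 c"
  proof (rule ext)
    fix x
    have "Transposition.transpose 3 c (Transposition.transpose 2 b (Transposition.transpose 1 a (s x))) = x"
      using \<open>s3 = id\<close> unfolding s3_def s2_def s1_def by (simp add: fun_eq_iff)
    then have "Transposition.transpose 1 a (Transposition.transpose 2 b (Transposition.transpose 3 c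
       (Transposition.transpose 3 c (Transposition.transpose 2 b (Transposition.transpose 1 a (s x)))))) =
       Transposition.transpose 1 a (Transposition.transpose 2 b (Transposition.transpose 3 c x))" by simp
    then show "s x = (Transposition.transpose 1 a \<circ> Transposition.transpose 2 b \<circ> Transposition.transpose 3 c) x"
      by simp
  qed
  then show ?thesis using b1 c1 c2 by blast
qed

lemma comb:
  fixes s :: "4 \<Rightarrow> 4"
  assumes sp: "s permutes UNIV" and ev: "evenperm s"
  shows "Oddt (\<Sum>k\<in>UNIV. Bv k * Gv (s k))"
proof -
  obtain a b c :: 4 where bc: "b \<noteq> 1" "c \<noteq> 1" "c \<noteq> 2" and
    s: "s = Transposition.transpose 1 a \<circ> Transposition.transpose 2 b \<circ> Transposition.transpose 3 c"
    using perm4_decomp[OF sp] by blast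
  have "evenperm s = (evenperm (Transposition.transpose 1 a) = evenperm (Transposition.transpose 2 b \<circ> Transposition.transpose 3 c))"
    unfolding s comp_assoc by (intro evenperm_comp permutation_compose permutation_swap_id)
  also have "\<dots> = ((1 = a) = ((2 = b) = (3 = c)))"
    by (simp add: evenperm_comp permutation_swap_id evenperm_swap)
  finally have e: "(1 = a) = ((2 = b) = (3 = c))" using ev by simp
  have "odd (\<Sum>k\<in>UNIV. fst (pm (eB k) (eG (s k)))) \<or> odd (\<Sum>k\<in>UNIV. snd (pm (eB k) (eG (s k))))"
    using exhaust_4[of a] exhaust_4[of b] exhaust_4[of c] bc e
    unfolding s
    by (elim disjE; simp add: sum_4 eB_def eG_def pm_def transpose_def)
  then show ?thesis unfolding sum_enc by (rule Oddt_intro)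
qed



lemma rat_unique:
  assumes "a \<in> \<rat>" "b \<in> \<rat>" "a' \<in> \<rat>" "b' \<in> \<rat>" "a + b * sqrt 5 = a' + b' * sqrt 5"
  shows "a = a' \<and> b = b'"
proof (cases "b = b'")
  case True then show ?thesis using assms by simp
next
  case False
  then have "b - b' \<noteq> 0" by simp
  moreover have "(b - b') * sqrt 5 = a' - a" using assms(5) by (simp add: algebra_simps)
  ultimately have "sqrt 5 = (a' - a) / (b - b')" by (simp add: field_simps)
  moreover have "(a' - a) / (b - b') \<in> \<rat>" using assms(1-4) by (intro Rats_divide Rats_diff)
  ultimately show ?thesis using sqrt5_irr by simp
qed

lemma galois_eq:
  assumes a: "a \<in> \<rat>" and b: "b \<in> \<rat>"
  shows "galois (a + b * sqrt 5) = a - b * sqrt 5"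
  unfolding galois_def
proof (rule the_equality)
  show "\<exists>a'\<in>\<rat>. \<exists>b'\<in>\<rat>. a + b * sqrt 5 = a' + b' * sqrt 5 \<and> a - b * sqrt 5 = a' - b' * sqrt 5"
    using a b by blast
next
  fix y assume "\<exists>a'\<in>\<rat>. \<exists>b'\<in>\<rat>. a + b * sqrt 5 = a' + b' * sqrt 5 \<and> y = a' - b' * sqrt 5"
  then obtain a' b' where h: "a' \<in> \<rat>" "b' \<in> \<rat>" "a + b * sqrt 5 = a' + b' * sqrt 5" "y = a' - b' * sqrt 5"
    by blast
  then have "a = a' \<and> b = b'" using rat_unique a b by blast
  then show "y = a - b * sqrt 5" using h by simp
qed

lemma galois_rat: "q \<in> \<rat> \<Longrightarrow> galois q = q"
  using galois_eq[of q 0] by simp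

definition gv :: "real^4 \<Rightarrow> real^4" where "gv v = (\<chi> i. galois (v $ i))"

lemma Delta'_gv: "Delta' = gv ` Delta"
  unfolding Delta'_def gv_def by simp

lemma gv_rat: "\<forall>i. v $ i \<in> \<rat> \<Longrightarrow> gv v = v"
  unfolding gv_def by (simp add: galois_rat vec_eq_iff)

lemma Delta_cases:
  assumes "v \<in> Delta"
  shows "(\<forall>i. v $ i \<in> \<rat>) \<or>
    (\<exists>s p. (\<forall>j. s j \<in> {-1, 1::real}) \<and> p permutes UNIV \<and> evenperm p \<and> v = (\<chi> j. s j * Bv (p j) / 2))"
proof -
  consider (t1) i s where "s \<in> {-1, 1::real}" "v = (\<chi> j. if j = i then s else 0)"
    | (t2) s where "\<forall>j. s j \<in> {-1, 1::real}" "v = (\<chi> j. s j / 2)"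
    | (t3) s p where "\<forall>j. s j \<in> {-1, 1::real}" "p permutes UNIV" "evenperm p"
          "v = (\<chi> j. s j * ((vector [0, 1, tau', tau] :: real^4) $ p j) / 2)"
    using assms unfolding Delta_def by blast
  then show ?thesis
  proof cases
    case t1 then show ?thesis by auto
  next
    case t2
    have "\<forall>i. v $ i \<in> \<rat>"
    proof
      fix i have "s i \<in> \<rat>" using t2(1) by (metis Rats_1 Rats_minus_iff insert_iff singletonD)
      then show "v $ i \<in> \<rat>" using t2(2) by simp
    qed
    then show ?thesis by blast
  next
    case t3 then show ?thesis unfolding Bv_def by blast
  qed
qed

lemma BG_rat: "\<exists>u w. u \<in> \<rat> \<and> w \<in> \<rat> \<and> Bv k = u + w * sqrt 5 \<and> Gv k = u - w * sqrt 5"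
proof -
  have "k = 1 \<or> k = 2 \<or> k = 3 \<or> k = 4" by (rule exhaust_4)
  then show ?thesis
  proof (elim disjE)
    assume "k = 1" then show ?thesis by (intro exI[of _ 0]) (simp add: Bv_simps Gv_simps)
  next
    assume "k = 2" then show ?thesis by (intro exI[of _ 1] exI[of _ 0]) (simp add: Bv_simps Gv_simps)
  next
    assume "k = 3" then show ?thesis
      by (intro exI[of _ "1/2"] exI[of _ "-1/2"]) (simp add: Bv_simps Gv_simps tau_def tau'_def field_simps)
  next
    assume "k = 4" then show ?thesis
      by (intro exI[of _ "1/2"] exI[of _ "1/2"]) (simp add: Bv_simps Gv_simps tau_def tau'_def field_simps)
  qed
qed

lemma galois_coord:
  assumes s: "s \<in> {-1, 1::real}"
  shows "galois (s * Bv k / 2) = s * Gv k / 2"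
proof -
  obtain u w where uw: "u \<in> \<rat>" "w \<in> \<rat>" "Bv k = u + w * sqrt 5" "Gv k = u - w * sqrt 5"
    using BG_rat by blast
  have sq: "s \<in> \<rat>" using s by auto
  have e1: "s * Bv k / 2 = (s * u / 2) + (s * w / 2) * sqrt 5" using uw by (simp add: algebra_simps)
  have e2: "galois ((s * u / 2) + (s * w / 2) * sqrt 5) = (s * u / 2) - (s * w / 2) * sqrt 5"
    using uw sq by (intro galois_eq) auto
  have e3: "(s * u / 2) - (s * w / 2) * sqrt 5 = s * Gv k / 2" unfolding uw(4) by (simp add: algebra_simps)
  show ?thesis by (simp only: e1 e2 e3)
qed

lemma gv_T3:
  assumes "\<forall>j. s j \<in> {-1, 1::real}"
  shows "gv (\<chi> j. s j * Bv (p j) / 2) = (\<chi> j. s j * Gv (p j) / 2)"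
  unfolding gv_def using assms galois_coord by (simp add: vec_eq_iff)

lemma Bsq: "(\<Sum>k\<in>UNIV. (Bv k)^2) = 4"
proof -
  have "tau'^2 + tau^2 = 3" unfolding tau'_eq using tau_sq by (simp add: power2_eq_square algebra_simps)
  then show ?thesis by (simp add: sum_4 Bv_simps)
qed
lemma Gsq: "(\<Sum>k\<in>UNIV. (Gv k)^2) = 4"
proof -
  have "tau'^2 + tau^2 = 3" unfolding tau'_eq using tau_sq by (simp add: power2_eq_square algebra_simps)
  then show ?thesis by (simp add: sum_4 Gv_simps)
qed

lemma sign_sq: "s \<in> {-1, 1::real} \<Longrightarrow> s * s = 1" by auto

lemma norm_T3:
  assumes s: "\<forall>j. s j \<in> {-1, 1::real}" and p: "p permutes UNIV" and sq: "(\<Sum>k\<in>UNIV. (f k)^2) = (4::real)"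
  shows "(\<chi> j. s j * f (p j) / 2) \<bullet> (\<chi> j. s j * f (p j) / 2) = 1"
proof -
  have "(\<chi> j. s j * f (p j) / 2) \<bullet> (\<chi> j. s j * f (p j) / 2) = (\<Sum>j\<in>UNIV. (s j * s j) * (f (p j))^2 / 4)"
    unfolding inner_vec_def by (simp add: power2_eq_square algebra_simps)
  also have "\<dots> = (\<Sum>j\<in>UNIV. (f (p j))^2 / 4)" using s sign_sq by simp
  also have "\<dots> = (\<Sum>k\<in>UNIV. (f k)^2 / 4)"
    using sum.permute[OF p, of "\<lambda>k. (f k)^2 / 4"] by (simp add: comp_def)
  also have "\<dots> = 1" using sq by (simp add: sum_divide_distrib[symmetric])
  finally show ?thesis .
qed

lemma Zt_BG: "Zt (Bv k * Gv l)"
  unfolding BG_enc Zt_def by blast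

lemma D2_sum: "(\<And>x. x \<in> A \<Longrightarrow> D2 (f x)) \<Longrightarrow> D2 (sum f A)"
proof (induction A rule: infinite_finite_induct)
  case (infinite A)
  then show ?case using D2_two[OF Zt_zero] by simp
next
  case empty
  then show ?case using D2_two[OF Zt_zero] by simp
next
  case (insert x F)
  then show ?case by (simp add: D2_add)
qed

lemma inner_odd:
  assumes s: "\<forall>j. s j \<in> {-1, 1::real}" and p: "p permutes UNIV" and ep: "evenperm p"
    and s': "\<forall>j. s' j \<in> {-1, 1::real}" and p': "p' permutes UNIV" and ep': "evenperm p'"
  shows "Oddt (4 * ((\<chi> j. s j * Bv (p j) / 2) \<bullet> (\<chi> j. s' j * Gv (p' j) / 2)))"
proof -
  define X where "X j = Bv (p j) * Gv (p' j)" for j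
  have "4 * ((\<chi> j. s j * Bv (p j) / 2) \<bullet> (\<chi> j. s' j * Gv (p' j) / 2)) = (\<Sum>j\<in>UNIV. s j * s' j * X j)"
    unfolding inner_vec_def X_def by (simp add: sum_distrib_left algebra_simps)
  also have "\<dots> = (\<Sum>j\<in>UNIV. X j) + (\<Sum>j\<in>UNIV. (s j * s' j - 1) * X j)"
    by (simp add: sum.distrib[symmetric] algebra_simps)
  finally have e: "4 * ((\<chi> j. s j * Bv (p j) / 2) \<bullet> (\<chi> j. s' j * Gv (p' j) / 2)) =
      (\<Sum>j\<in>UNIV. X j) + (\<Sum>j\<in>UNIV. (s j * s' j - 1) * X j)" .
  define \<sigma> where "\<sigma> = p' \<circ> inv p"
  have sp: "\<sigma> permutes UNIV" unfolding \<sigma>_def using p p' by (intro permutes_compose permutes_inv)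
  have fu: "finite (UNIV::4 set)" by simp
  have pp: "permutation p" "permutation p'" using permutes_imp_permutation[OF fu p] permutes_imp_permutation[OF fu p'] by auto
  have "evenperm \<sigma> = (evenperm p' = evenperm (inv p))"
    unfolding \<sigma>_def using pp by (intro evenperm_comp permutation_inverse)
  then have es: "evenperm \<sigma>" using ep ep' evenperm_inv[OF pp(1)] by simp
  have "(\<Sum>k\<in>UNIV. Bv k * Gv (\<sigma> k)) = (\<Sum>j\<in>UNIV. Bv (p j) * Gv (\<sigma> (p j)))"
    using sum.permute[OF p, of "\<lambda>k. Bv k * Gv (\<sigma> k)"] by (simp add: comp_def)
  also have "\<dots> = (\<Sum>j\<in>UNIV. X j)"
    unfolding X_def \<sigma>_def by (simp add: permutes_inverses[OF p])
  finally have o1: "Oddt (\<Sum>j\<in>UNIV. X j)" using comb[OF sp es] by simp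
  have o2: "D2 (\<Sum>j\<in>UNIV. (s j * s' j - 1) * X j)"
  proof (rule D2_sum)
    fix j :: 4
    have zx: "Zt (X j)" unfolding X_def by (rule Zt_BG)
    have "s j = -1 \<or> s j = 1" "s' j = -1 \<or> s' j = 1" using s s' by auto
    then have "s j * s' j - 1 = 0 \<or> s j * s' j - 1 = -2" by auto
    then show "D2 ((s j * s' j - 1) * X j)"
    proof
      assume "s j * s' j - 1 = 0" then show ?thesis using D2_two[OF Zt_zero] by simp
    next
      assume h: "s j * s' j - 1 = -2"
      have "Zt (- X j)" using zx by (rule Zt_minus)
      then have "D2 (2 * (- X j))" by (rule D2_two)
      moreover have "(s j * s' j - 1) * X j = 2 * (- X j)" unfolding h by simp
      ultimately show ?thesis by simp
    qed
  qed
  show ?thesis unfolding e using o1 o2 by (rule Oddt_add_D2)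
qed

theorem mainTheorem3:
  assumes "\<alpha> \<in> Delta_dot" and "\<beta> \<in> Delta'_dot"
  shows "\<forall>n::nat. n > 0 \<longrightarrow> (reflect \<alpha> \<circ> reflect \<beta>) ^^ n \<noteq> id"
proof -
  have a1: "\<alpha> \<in> Delta" and a2: "\<alpha> \<notin> Delta'" using assms(1) unfolding Delta_dot_def K_def by auto
  have b1: "\<beta> \<in> Delta'" and b2: "\<beta> \<notin> Delta" using assms(2) unfolding Delta'_dot_def K_def by auto
  obtain s p where s: "\<forall>j. s j \<in> {-1, 1::real}" and p: "p permutes UNIV" "evenperm p"
    and \<alpha>: "\<alpha> = (\<chi> j. s j * Bv (p j) / 2)"
  proof -
    have "\<not> (\<forall>i. \<alpha> $ i \<in> \<rat>)"
    proof
      assume "\<forall>i. \<alpha> $ i \<in> \<rat>"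
      then have "gv \<alpha> = \<alpha>" by (rule gv_rat)
      then have "\<alpha> \<in> Delta'" using a1 unfolding Delta'_gv by (metis image_eqI)
      then show False using a2 by simp
    qed
    then show ?thesis using Delta_cases[OF a1] that by blast
  qed
  obtain \<gamma> where g: "\<gamma> \<in> Delta" and bg: "\<beta> = gv \<gamma>" using b1 unfolding Delta'_gv by blast
  obtain s' p' where s': "\<forall>j. s' j \<in> {-1, 1::real}" and p': "p' permutes UNIV" "evenperm p'"
    and \<gamma>: "\<gamma> = (\<chi> j. s' j * Bv (p' j) / 2)"
  proof -
    have "\<not> (\<forall>i. \<gamma> $ i \<in> \<rat>)"
    proof
      assume "\<forall>i. \<gamma> $ i \<in> \<rat>"
      then have "gv \<gamma> = \<gamma>" by (rule gv_rat)
      then show False using g b2 bg by simp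
    qed
    then show ?thesis using Delta_cases[OF g] that by blast
  qed
  have \<beta>: "\<beta> = (\<chi> j. s' j * Gv (p' j) / 2)" using bg \<gamma> gv_T3[OF s'] by simp
  have aa: "\<alpha> \<bullet> \<alpha> = 1" unfolding \<alpha> using norm_T3[OF s p(1) Bsq] .
  have bb: "\<beta> \<bullet> \<beta> = 1" unfolding \<beta> using norm_T3[OF s' p'(1) Gsq] .
  have od: "Oddt (4 * (\<alpha> \<bullet> \<beta>))" unfolding \<alpha> \<beta> using inner_odd[OF s p s' p'] .
  show ?thesis by (rule core[OF aa bb od])
qed

end
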